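(* Let $b>3$ be an integer. Then there is at most one prime number that is antipalindromic in base $b$, namely: if $p$ is a prime that is antipalindromic in base $b$, then $p=\frac{b-1}{2}$.
   Context: For an integer $b\ge 2$, every natural number $m$ has a unique base-$b$ expansion $m=a_nb^n+\dots+a_1b+a_0$ with $a_0,\dots,a_n\in\{0,1,\dots,b-1\}$ and $a_n\neq 0$. The number $m$ is antipalindromic in base $b$ if $a_j=b-1-a_{n-j}$ for all $j\in\{0,1,\dots,n\}$. *)

theory Defs
  imports Main "HOL-Computational_Algebra.Primes"
begin

definition digit :: "nat \<Rightarrow> nat \<Rightarrow> nat \<Rightarrow> nat" where
  "digit b m j = (m div b ^ j) mod b"

text \<open>Index n of the leading digit of m > 0 in base b (the n with b^n \<le> m < b^(n+1)).\<close>
definition top_index :: "nat \<Rightarrow> nat \<Rightarrow> nat" where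
  "top_index b m = (GREATEST n. b ^ n \<le> m)"

text \<open>m is antipalindromic in base b: a_j = b - 1 - a_(n-j) for all j \<le> n.
  Only positive m have an expansion with nonzero leading digit.\<close>
definition antipalindromic :: "nat \<Rightarrow> nat \<Rightarrow> bool" where
  "antipalindromic b m \<longleftrightarrow> 0 < m \<and>
     (\<forall>j \<le> top_index b m. digit b m j = b - 1 - digit b m (top_index b m - j))"

end

theory Submission
  imports Defs "HOL-Number_Theory.Cong"
begin

lemma top_index_props:
  assumes "b > 1" "m > 0"
  shows "b ^ top_index b m \<le> m" "m < b ^ Suc (top_index b m)"
proof -
  have bnd: "\<forall>y. b ^ y \<le> m \<longrightarrow> y \<le> m"
  proof (intro allI impI)
    fix y assume "b ^ y \<le> m"
    moreover have "y < b ^ y" using less_exp[of y] power_mono[of 2 b y] assms(1) by linarith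
    ultimately show "y \<le> m" by simp
  qed
  have p0: "b ^ 0 \<le> m" using assms by simp
  show "b ^ top_index b m \<le> m" unfolding top_index_def
    using GreatestI_nat[of "\<lambda>n. b ^ n \<le> m", OF p0] bnd by blast
  show "m < b ^ Suc (top_index b m)"
  proof (rule ccontr)
    assume "\<not> ?thesis"
    then have "b ^ Suc (top_index b m) \<le> m" by simp
    then have "Suc (top_index b m) \<le> top_index b m" unfolding top_index_def
      using Greatest_le_nat[of "\<lambda>n. b ^ n \<le> m"] bnd by blast
    then show False by simp
  qed
qed

lemma digits_sum: "m mod b ^ k = (\<Sum>j<k. digit b m j * b ^ j)"
proof (induction k)
  case 0 then show ?case by simp
next
  case (Suc k)
  have "m mod b ^ Suc k = m mod (b ^ k * b)" by (simp add: mult.commute)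
  also have "\<dots> = b ^ k * (m div b ^ k mod b) + m mod b ^ k" by (rule mod_mult2_eq)
  finally show ?case using Suc by (simp add: digit_def mult.commute)
qed

theorem mainTheorem5:
  fixes b p :: nat
  assumes "b > 3" and "prime p" and "antipalindromic b p"
  shows "2 * p = b - 1"
proof -
  define n where "n = top_index b p"
  define B where "B = b - 1"
  define d where "d = (\<lambda>j. digit b p j)"
  have A: "0 < p \<and> (\<forall>j\<le>n. d j = b - 1 - d (n - j))"
    using assms(3) unfolding antipalindromic_def n_def d_def by blast
  have p0: "p > 0" using A by blast
  have anti: "\<forall>j\<le>n. d j = b - 1 - d (n - j)" using A by blast
  have lo: "b ^ n \<le> p" and hi: "p < b ^ Suc n"
    using top_index_props[OF _ p0, of b] assms(1) n_def by auto
  have dlt: "d j < b" for j using assms(1) by (simp add: d_def digit_def)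
  have pe: "p = (\<Sum>j<Suc n. d j * b ^ j)"
    using digits_sum[of p b "Suc n"] hi d_def by simp
  have bc: "[b = 1] (mod B)"
  proof -
    have "b = 1 * B + 1" using assms(1) B_def by simp
    moreover have "1 \<le> b" using assms(1) by simp
    then have "[b = 1] (mod B) = (\<exists>q. b = q * B + 1)" by (rule cong_le_nat)
    ultimately show ?thesis by blast
  qed
  have "[p = (\<Sum>j<Suc n. d j * 1 ^ j)] (mod B)"
    unfolding pe by (intro cong_sum cong_mult cong_pow bc cong_refl)
  then have cS: "[p = (\<Sum>j\<le>n. d j)] (mod B)" by (simp add: lessThan_Suc_atMost)
  have pair: "d j + d (n - j) = B" if "j \<le> n" for j
  proof -
    have "d j = b - 1 - d (n - j)" using anti that by blast
    then show ?thesis using dlt[of "n-j"] B_def by simp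
  qed
  have rev: "(\<Sum>j\<le>n. d (n - j)) = (\<Sum>j\<le>n. d j)"
    by (rule sum.reindex_bij_witness[of _ "\<lambda>j. n - j" "\<lambda>j. n - j"]) auto
  have S2: "2 * (\<Sum>j\<le>n. d j) = (n + 1) * B"
  proof -
    have "2 * (\<Sum>j\<le>n. d j) = (\<Sum>j\<le>n. d j) + (\<Sum>j\<le>n. d (n - j))" using rev by simp
    also have "\<dots> = (\<Sum>j\<le>n. d j + d (n - j))" by (simp add: sum.distrib)
    also have "\<dots> = (\<Sum>j\<le>n. B)" using pair by (intro sum.cong) auto
    finally show ?thesis by simp
  qed
  have key: "(2 * p) mod (2 * B) = ((n + 1) * B) mod (2 * B)"
  proof -
    have e1: "(2 * p) mod (2 * B) = 2 * (p mod B)" by (rule mult_mod_right[symmetric])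
    have e2: "((n + 1) * B) mod (2 * B) = 2 * ((\<Sum>j\<le>n. d j) mod B)"
      unfolding S2[symmetric] by (rule mult_mod_right[symmetric])
    show ?thesis using e1 e2 cS unfolding cong_def by simp
  qed
  have B3: "B \<ge> 3" using assms(1) B_def by simp
  have pr: "\<And>c. c dvd p \<Longrightarrow> c = 1 \<or> c = p" using assms(2) by (simp add: prime_nat_iff)
  show ?thesis
  proof (cases "even n")
    case False
    then obtain r0 where "n = 2 * r0 + 1" using oddE by blast
    then have r: "n + 1 = 2 * (r0 + 1)" by simp
    define r where "r = r0 + 1"
    note r = r[folded r_def]
    have "(n + 1) * B = r * (2 * B)" using r by simp
    then have "(2 * p) mod (2 * B) = 0" using key by simp
    then have "(2 * B) dvd (2 * p)" by (simp add: mod_eq_0_iff_dvd)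
    then have "B dvd p" by simp
    then have "B = p" using pr[of B] B3 by auto
    moreover have "n \<ge> 1" using False by (cases n) auto
    then have "b \<le> b ^ n" using assms(1) by (simp add: self_le_power)
    ultimately show ?thesis using lo B_def assms(1) by simp
  next
    case True
    then obtain r where r: "n + 1 = 2 * r + 1" by auto
    have "((n + 1) * B) mod (2 * B) = B"
    proof -
      have h: "(n + 1) * B = B + r * (2 * B)" using r by (simp add: algebra_simps)
      have m1: "(B + r * (2 * B)) mod (2 * B) = B mod (2 * B)" by (rule mod_mult_self1)
      have m2: "B mod (2 * B) = B" using B3 by simp
      show ?thesis unfolding h by (simp only: m1 m2)
    qed
    then have "(2 * p) mod (2 * B) = B" using key by simp
    then obtain q where q: "2 * p = B * (2 * q + 1)"
    proof -
      have "2 * p = (2 * B) * ((2 * p) div (2 * B)) + B" using \<open>(2 * p) mod (2 * B) = B\<close>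
        using div_mult_mod_eq[of "2 * p" "2 * B"] \<open>(2 * p) mod (2 * B) = B\<close> by (simp add: mult.commute)
      moreover have "(2 * B) * ((2 * p) div (2 * B)) + B = B * (2 * ((2 * p) div (2 * B)) + 1)"
        by (simp only: algebra_simps)
      ultimately have "2 * p = B * (2 * ((2 * p) div (2 * B)) + 1)" by (rule trans)
      then show ?thesis by (rule that)
    qed
    have "even (B * (2 * q + 1))" using q by (metis dvd_triv_left)
    then have "even B" by simp
    then obtain c where c: "B = 2 * c" by auto
    have pc: "p = c * (2 * q + 1)" using q c by simp
    have "c dvd p" using pc by simp
    moreover have "c \<noteq> 1" using c B3 by auto
    ultimately have "c = p" using pr by blast
    then have "q = 0" using pc p0 c B3 by auto
    then show ?thesis using q B_def by simp
  qed
qed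

end
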